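(* For all graphs $G$ and $H$: if $G$ and $H$ are distinguishable by NC-1WL, then they are distinguishable by EB-1WL.
   Context: All graphs are finite, simple and undirected, without isolated vertices; $N(v)$ denotes the neighborhood of $v$. An ordered edge of $G=(V,E)$ is a pair $(u,v)$ with $\{u,v\}\in E$. EB-1WL coloring: $\mathrm{eb}^{(0)}(G,(u,v))=1$ for every ordered edge, and $\mathrm{eb}^{(\ell+1)}(G,(u,v)) = \big(\mathrm{eb}^{(\ell)}(G,(u,v)),\ \{\!\{\mathrm{eb}^{(\ell)}(G,(u,x)) : x\in N(u)\}\!\},\ \{\!\{(\mathrm{eb}^{(\ell)}(G,(u,y)),\mathrm{eb}^{(\ell)}(G,(v,y))) : y\in N(u)\cap N(v)\}\!\},\ \{\!\{\mathrm{eb}^{(\ell)}(G,(v,z)) : z\in N(v)\}\!\}\big)$. $\mathrm{eb}^{(\ell)}(G)$ is the multiset of $\mathrm{eb}^{(\ell)}(G,(u,v))$ over all ordered edges. $G$ and $H$ are distinguishable by EB-1WL if $|V(G)|\neq|V(H)|$ or there is $\ell$ with $\mathrm{eb}^{(\ell)}(G)\neq\mathrm{eb}^{(\ell)}(H)$. NC-1WL coloring of vertices: $\mathrm{nc}^{(0)}(G,v)=1$ and $\mathrm{nc}^{(\ell+1)}(G,v)=\big(\mathrm{nc}^{(\ell)}(G,v),\ \{\!\{\mathrm{nc}^{(\ell)}(G,u): u\in N(v)\}\!\},\ \{\!\{(\mathrm{nc}^{(\ell)}(G,u),\mathrm{nc}^{(\ell)}(G,w)) : u,w\in N(v),\ \{u,w\}\in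 E\}\!\}\big)$. $\mathrm{nc}^{(\ell)}(G)=\{\!\{\mathrm{nc}^{(\ell)}(G,v): v\in V\}\!\}$. $G$ and $H$ are distinguishable by NC-1WL if there is $\ell$ with $\mathrm{nc}^{(\ell)}(G)\neq\mathrm{nc}^{(\ell)}(H)$. Colors are nested tuples/multisets, comparable across graphs. *)

theory Defs
  imports Main "HOL-Library.Multiset"
begin

definition simple_graph :: "'a set \<Rightarrow> ('a \<times> 'a) set \<Rightarrow> bool" where
  "simple_graph V E \<longleftrightarrow> finite V \<and> E \<subseteq> V \<times> V \<and> sym E \<and> irrefl E
     \<and> (\<forall>v\<in>V. \<exists>u. (v, u) \<in> E)"

definition nbr :: "('a \<times> 'a) set \<Rightarrow> 'a \<Rightarrow> 'a set" where
  "nbr E v = {u. (v, u) \<in> E}"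

text \<open>Colours: nested tuples / multisets, shared across all graphs.\<close>
datatype ebcolor = EB0
  | EBS ebcolor "ebcolor multiset" "(ebcolor \<times> ebcolor) multiset" "ebcolor multiset"

datatype nccolor = NC0
  | NCS nccolor "nccolor multiset" "(nccolor \<times> nccolor) multiset"

fun eb :: "('a \<times> 'a) set \<Rightarrow> nat \<Rightarrow> 'a \<Rightarrow> 'a \<Rightarrow> ebcolor" where
  "eb E 0 u v = EB0"
| "eb E (Suc l) u v = EBS (eb E l u v)
      (image_mset (\<lambda>x. eb E l u x) (mset_set (nbr E u)))
      (image_mset (\<lambda>y. (eb E l u y, eb E l v y)) (mset_set (nbr E u \<inter> nbr E v)))
      (image_mset (\<lambda>z. eb E l v z) (mset_set (nbr E v)))"

definition eb_colors :: "('a \<times> 'a) set \<Rightarrow> nat \<Rightarrow> ebcolor multiset" where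
  "eb_colors E l = image_mset (\<lambda>(u, v). eb E l u v) (mset_set E)"

fun nc :: "('a \<times> 'a) set \<Rightarrow> nat \<Rightarrow> 'a \<Rightarrow> nccolor" where
  "nc E 0 v = NC0"
| "nc E (Suc l) v = NCS (nc E l v)
      (image_mset (\<lambda>u. nc E l u) (mset_set (nbr E v)))
      (image_mset (\<lambda>(u, w). (nc E l u, nc E l w))
         (mset_set {(u, w). u \<in> nbr E v \<and> w \<in> nbr E v \<and> (u, w) \<in> E}))"

definition nc_colors :: "'a set \<Rightarrow> ('a \<times> 'a) set \<Rightarrow> nat \<Rightarrow> nccolor multiset" where
  "nc_colors V E l = image_mset (nc E l) (mset_set V)"

definition eb_distinguishable ::
  "'a set \<Rightarrow> ('a \<times> 'a) set \<Rightarrow> 'b set \<Rightarrow> ('b \<times> 'b) set \<Rightarrow> bool" where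
  "eb_distinguishable VG EG VH EH \<longleftrightarrow>
     card VG \<noteq> card VH \<or> (\<exists>l. eb_colors EG l \<noteq> eb_colors EH l)"

definition nc_distinguishable ::
  "'a set \<Rightarrow> ('a \<times> 'a) set \<Rightarrow> 'b set \<Rightarrow> ('b \<times> 'b) set \<Rightarrow> bool" where
  "nc_distinguishable VG EG VH EH \<longleftrightarrow> (\<exists>l. nc_colors VG EG l \<noteq> nc_colors VH EH l)"

end

theory Submission
  imports Defs
begin

definition swapT :: "(ebcolor \<times> ebcolor) multiset \<Rightarrow> (ebcolor \<times> ebcolor) multiset" where
  "swapT T = image_mset prod.swap T"

primrec ebrev :: "nat \<Rightarrow> ebcolor \<Rightarrow> ebcolor" where
  "ebrev 0 c = c"
| "ebrev (Suc n) c = (case c of EB0 \<Rightarrow> EB0 | EBS c' A T B \<Rightarrow> EBS (ebrev n c') B (swapT T) A)"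

primrec ebdown :: "ebcolor \<Rightarrow> ebcolor" where
  "ebdown EB0 = EB0"
| "ebdown (EBS c A T B) = c"

primrec ebnb :: "ebcolor \<Rightarrow> ebcolor multiset" where
  "ebnb EB0 = {#}"
| "ebnb (EBS c A T B) = A"

primrec ebtri :: "ebcolor \<Rightarrow> (ebcolor \<times> ebcolor) multiset" where
  "ebtri EB0 = {#}"
| "ebtri (EBS c A T B) = T"

definition ncstep :: "(ebcolor \<Rightarrow> nccolor) \<Rightarrow> nat \<Rightarrow> ebcolor \<Rightarrow> nccolor" where
  "ncstep f l c = NCS (f (ebdown (ebdown c)))
     (image_mset (\<lambda>d. f (ebrev (2*l) (ebdown d))) (ebnb c))
     (sum_mset (image_mset (\<lambda>d. image_mset (\<lambda>pq. (f (snd pq), f (ebrev (2*l) (fst pq)))) (ebtri d)) (ebnb c)))"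

primrec ncF :: "nat \<Rightarrow> ebcolor \<Rightarrow> nccolor" where
  "ncF 0 c = NC0"
| "ncF (Suc l) c = ncstep (ncF l) l c"

lemma eb_rev: "eb E l u v = ebrev l (eb E l v u)"
proof (induction l arbitrary: u v)
  case 0
  then show ?case by simp
next
  case (Suc l)
  have "nbr E u \<inter> nbr E v = nbr E v \<inter> nbr E u" by blast
  then show ?case using Suc[symmetric] by (simp add: multiset.map_comp o_def swapT_def)
qed

lemma mset_Sigma:
  assumes "finite A" "\<forall>a\<in>A. finite (B a)"
  shows "image_mset f (mset_set (Sigma A B)) = (\<Sum>a\<in>A. image_mset (\<lambda>b. f (a,b)) (mset_set (B a)))"
  using assms
proof (induction A rule: finite_induct)
  case empty
  then show ?case by simp
next
  case (insert a A)
  have e: "Sigma (insert a A) B = Pair a ` B a \<union> Sigma A B" by auto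
  have d: "Pair a ` B a \<inter> Sigma A B = {}" using insert by auto
  have "mset_set (Sigma (insert a A) B) = mset_set (Pair a ` B a) + mset_set (Sigma A B)"
    unfolding e using insert d by (intro mset_set_Union) auto
  moreover have "mset_set (Pair a ` B a) = image_mset (Pair a) (mset_set (B a))"
    by (rule image_mset_mset_set[symmetric]) (auto intro: inj_onI)
  ultimately show ?case using insert by (simp add: multiset.map_comp o_def)
qed

lemma mset_sum_single:
  assumes "finite A"
  shows "image_mset f (mset_set A) = (\<Sum>a\<in>A. {#f a#})"
  using assms by (induction A rule: finite_induct) auto

lemma nc_eb:
  assumes fin: "finite E" and sy: "sym E"
  shows "(v,u) \<in> E \<Longrightarrow> nc E l v = ncF l (eb E (2*l) v u)"
proof (induction l arbitrary: v u)
  case 0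
  then show ?case by simp
next
  case (Suc l)
  have finN: "\<And>x. finite (nbr E x)"
  proof -
    fix x
    have "nbr E x \<subseteq> snd ` E" unfolding nbr_def by force
    then show "finite (nbr E x)" using fin finite_subset by blast
  qed
  have symN: "\<And>x y. x \<in> nbr E y \<Longrightarrow> y \<in> nbr E x" using sy unfolding nbr_def sym_def by blast
  have memN: "\<And>x y. (x \<in> nbr E y) = ((y,x) \<in> E)" unfolding nbr_def by simp
  have k: "2 * Suc l = Suc (Suc (2*l))" by simp
  have A: "image_mset (\<lambda>d. ncF l (ebrev (2*l) (ebdown d))) (image_mset (eb E (Suc (2*l)) v) (mset_set (nbr E v)))
        = image_mset (nc E l) (mset_set (nbr E v))"
  proof -
    have "image_mset (\<lambda>d. ncF l (ebrev (2*l) (ebdown d))) (image_mset (eb E (Suc (2*l)) v) (mset_set (nbr E v)))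
       = image_mset (\<lambda>x. ncF l (eb E (2*l) x v)) (mset_set (nbr E v))"
      by (simp add: multiset.map_comp o_def eb_rev[symmetric])
    also have "\<dots> = image_mset (nc E l) (mset_set (nbr E v))"
    proof (rule image_mset_cong)
      fix x assume "x \<in># mset_set (nbr E v)"
      then have "x \<in> nbr E v" using finN by simp
      then have "(x,v) \<in> E" using symN memN by blast
      then show "ncF l (eb E (2*l) x v) = nc E l x" using Suc.IH by simp
    qed
    finally show ?thesis .
  qed
  have T: "(\<lambda>d. image_mset (\<lambda>pq. (ncF l (snd pq), ncF l (ebrev (2*l) (fst pq)))) (ebtri d)) (eb E (Suc (2*l)) v x)
     = image_mset (\<lambda>w. (nc E l x, nc E l w)) (mset_set (nbr E v \<inter> nbr E x))"
    if xv: "x \<in> nbr E v" for x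
  proof -
    have "(\<lambda>d. image_mset (\<lambda>pq. (ncF l (snd pq), ncF l (ebrev (2*l) (fst pq)))) (ebtri d)) (eb E (Suc (2*l)) v x)
      = image_mset (\<lambda>y. (ncF l (eb E (2*l) x y), ncF l (eb E (2*l) y v))) (mset_set (nbr E v \<inter> nbr E x))"
      by (simp add: multiset.map_comp o_def eb_rev[symmetric])
    also have "\<dots> = image_mset (\<lambda>w. (nc E l x, nc E l w)) (mset_set (nbr E v \<inter> nbr E x))"
    proof (rule image_mset_cong)
      fix y assume "y \<in># mset_set (nbr E v \<inter> nbr E x)"
      then have "y \<in> nbr E v" "y \<in> nbr E x" using finN by auto
      then have "(x,y) \<in> E" "(y,v) \<in> E" using symN memN by blast+
      then show "(ncF l (eb E (2*l) x y), ncF l (eb E (2*l) y v)) = (nc E l x, nc E l y)"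
        using Suc.IH by simp
    qed
    finally show ?thesis .
  qed
  have S: "{(u, w). u \<in> nbr E v \<and> w \<in> nbr E v \<and> (u, w) \<in> E} = Sigma (nbr E v) (\<lambda>x. nbr E v \<inter> nbr E x)"
    using memN by auto
  have B: "image_mset (\<lambda>(u, w). (nc E l u, nc E l w))
         (mset_set {(u, w). u \<in> nbr E v \<and> w \<in> nbr E v \<and> (u, w) \<in> E})
     = sum_mset (image_mset (\<lambda>d. image_mset (\<lambda>pq. (ncF l (snd pq), ncF l (ebrev (2*l) (fst pq)))) (ebtri d))
          (image_mset (eb E (Suc (2*l)) v) (mset_set (nbr E v))))"
  proof -
    have "image_mset (\<lambda>(u, w). (nc E l u, nc E l w))
         (mset_set {(u, w). u \<in> nbr E v \<and> w \<in> nbr E v \<and> (u, w) \<in> E})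
       = (\<Sum>x\<in>nbr E v. image_mset (\<lambda>w. (nc E l x, nc E l w)) (mset_set (nbr E v \<inter> nbr E x)))"
      unfolding S using finN by (subst mset_Sigma) auto
    also have "\<dots> = (\<Sum>x\<in>nbr E v. (\<lambda>d. image_mset (\<lambda>pq. (ncF l (snd pq), ncF l (ebrev (2*l) (fst pq)))) (ebtri d)) (eb E (Suc (2*l)) v x))"
      using T by (intro sum.cong) auto
    also have "\<dots> = sum_mset (image_mset (\<lambda>d. image_mset (\<lambda>pq. (ncF l (snd pq), ncF l (ebrev (2*l) (fst pq)))) (ebtri d))
          (image_mset (eb E (Suc (2*l)) v) (mset_set (nbr E v))))"
      by (simp add: sum_unfold_sum_mset multiset.map_comp o_def)
    finally show ?thesis .
  qed
  have "eb E (2 * Suc l) v u = EBS (eb E (Suc (2*l)) v u)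
      (image_mset (eb E (Suc (2*l)) v) (mset_set (nbr E v)))
      (image_mset (\<lambda>y. (eb E (Suc (2*l)) v y, eb E (Suc (2*l)) u y)) (mset_set (nbr E v \<inter> nbr E u)))
      (image_mset (eb E (Suc (2*l)) u) (mset_set (nbr E u)))"
    unfolding k by (simp only: eb.simps)
  moreover have "ebdown (eb E (Suc (2*l)) v u) = eb E (2*l) v u" by simp
  ultimately show ?case using Suc.IH[OF Suc.prems] A B
    by (simp only: ncF.simps ncstep_def nc.simps ebdown.simps ebnb.simps)
qed


definition Gc :: "nat \<Rightarrow> ebcolor \<Rightarrow> nccolor \<times> nat" where
  "Gc l c = (ncF l (ebdown c), size (ebnb c))"

lemma sg_facts:
  assumes "simple_graph V E"
  shows "finite E" "sym E" "E \<subseteq> V \<times> V" "finite V" "\<And>v. finite (nbr E v)"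
    "\<And>v. v \<in> V \<Longrightarrow> card (nbr E v) > 0"
proof -
  show fV: "finite V" and sub: "E \<subseteq> V \<times> V" and "sym E" using assms unfolding simple_graph_def by auto
  show fE: "finite E" using fV sub finite_subset by blast
  show fN: "\<And>v. finite (nbr E v)"
  proof -
    fix v
    have "nbr E v \<subseteq> snd ` E" unfolding nbr_def by force
    then show "finite (nbr E v)" using fE finite_subset by blast
  qed
  show "\<And>v. v \<in> V \<Longrightarrow> card (nbr E v) > 0"
  proof -
    fix v assume "v \<in> V"
    then obtain u where "(v,u) \<in> E" using assms unfolding simple_graph_def by auto
    then have "u \<in> nbr E v" unfolding nbr_def by simp
    then show "card (nbr E v) > 0" using fN card_gt_0_iff by blast
  qed
qed

lemma edge_G:
  assumes "simple_graph V E" "(v,u) \<in> E"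
  shows "Gc l (eb E (Suc (2*l)) v u) = (nc E l v, card (nbr E v))"
proof -
  have "nc E l v = ncF l (eb E (2*l) v u)" using nc_eb[OF sg_facts(1,2)[OF assms(1)] assms(2)] .
  then show ?thesis unfolding Gc_def using sg_facts(5)[OF assms(1)] by simp
qed

lemma count_lemma:
  assumes sg: "simple_graph V E"
  shows "count (image_mset (Gc l) (eb_colors E (Suc (2*l)))) (c,d)
     = d * count (image_mset (\<lambda>v. (nc E l v, card (nbr E v))) (mset_set V)) (c,d)"
proof -
  note F = sg_facts[OF sg]
  have S: "E = Sigma V (nbr E)" using F(3) unfolding nbr_def by auto
  have "image_mset (Gc l) (eb_colors E (Suc (2*l)))
      = image_mset (\<lambda>(v,u). Gc l (eb E (Suc (2*l)) v u)) (mset_set E)"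
    unfolding eb_colors_def multiset.map_comp
    by (rule image_mset_cong) (auto simp del: eb.simps)
  also have "\<dots> = image_mset (\<lambda>(v,u). (nc E l v, card (nbr E v))) (mset_set E)"
  proof (rule image_mset_cong)
    fix x assume "x \<in># mset_set E"
    then have "x \<in> E" using F(1) by simp
    then show "(\<lambda>(v,u). Gc l (eb E (Suc (2*l)) v u)) x = (\<lambda>(v,u). (nc E l v, card (nbr E v))) x"
      using edge_G[OF sg] by (cases x) auto
  qed
  also have "\<dots> = (\<Sum>v\<in>V. image_mset (\<lambda>u. (nc E l v, card (nbr E v))) (mset_set (nbr E v)))"
  proof -
    have S': "mset_set E = mset_set (Sigma V (nbr E))" by (rule arg_cong[OF S])
    show ?thesis unfolding S' using F(4,5) by (subst mset_Sigma) auto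
  qed
  finally have eq: "image_mset (Gc l) (eb_colors E (Suc (2*l))) = \<dots>" .
  have "count (image_mset (Gc l) (eb_colors E (Suc (2*l)))) (c,d)
     = (\<Sum>v\<in>V. if (nc E l v, card (nbr E v)) = (c,d) then d else 0)"
    unfolding eq count_sum by (intro sum.cong) (auto simp: count_image_mset F(5))
  also have "\<dots> = d * (\<Sum>v\<in>V. if (nc E l v, card (nbr E v)) = (c,d) then 1 else 0)"
    by (subst sum_distrib_left) (rule sum.cong, simp_all)
  also have "(\<Sum>v\<in>V. if (nc E l v, card (nbr E v)) = (c,d) then 1 else 0)
      = count (image_mset (\<lambda>v. (nc E l v, card (nbr E v))) (mset_set V)) (c,d)"
    unfolding mset_sum_single[OF F(4)] count_sum by (rule sum.cong) auto
  finally show ?thesis .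
qed

lemma count_zero:
  assumes sg: "simple_graph V E"
  shows "count (image_mset (\<lambda>v. (nc E l v, card (nbr E v))) (mset_set V)) (c,0) = 0"
proof -
  note F = sg_facts[OF sg]
  have "(c,0) \<notin># image_mset (\<lambda>v. (nc E l v, card (nbr E v))) (mset_set V)"
  proof
    assume "(c,0) \<in># image_mset (\<lambda>v. (nc E l v, card (nbr E v))) (mset_set V)"
    then obtain v where "v \<in> V" "card (nbr E v) = 0" using F(4) by auto
    then show False using F(6) by fastforce
  qed
  then show ?thesis by (meson not_in_iff)
qed

theorem mainTheorem3:
  fixes VG :: "'a set" and EG :: "('a \<times> 'a) set"
    and VH :: "'b set" and EH :: "('b \<times> 'b) set"
  assumes "simple_graph VG EG" and "simple_graph VH EH"
    and "nc_distinguishable VG EG VH EH"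
  shows "eb_distinguishable VG EG VH EH"
proof (rule ccontr)
  assume "\<not> eb_distinguishable VG EG VH EH"
  then have ebeq: "\<And>l. eb_colors EG l = eb_colors EH l" unfolding eb_distinguishable_def by auto
  obtain l where ne: "nc_colors VG EG l \<noteq> nc_colors VH EH l"
    using assms(3) unfolding nc_distinguishable_def by auto
  let ?WG = "image_mset (\<lambda>v. (nc EG l v, card (nbr EG v))) (mset_set VG)"
  let ?WH = "image_mset (\<lambda>v. (nc EH l v, card (nbr EH v))) (mset_set VH)"
  have "?WG = ?WH"
  proof (rule multiset_eqI)
    fix x :: "nccolor \<times> nat"
    obtain c d where x: "x = (c,d)" by fastforce
    show "count ?WG x = count ?WH x"
    proof (cases "d = 0")
      case True
      then show ?thesis unfolding x using count_zero[OF assms(1)] count_zero[OF assms(2)] by simp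
    next
      case False
      have "d * count ?WG (c,d) = count (image_mset (Gc l) (eb_colors EG (Suc (2*l)))) (c,d)"
        using count_lemma[OF assms(1), of l c d] by simp
      also have "\<dots> = count (image_mset (Gc l) (eb_colors EH (Suc (2*l)))) (c,d)"
        using ebeq by simp
      also have "\<dots> = d * count ?WH (c,d)"
        using count_lemma[OF assms(2), of l c d] by simp
      finally have "d * count ?WG (c,d) = d * count ?WH (c,d)" .
      then show ?thesis unfolding x using False by simp
    qed
  qed
  then have "image_mset fst ?WG = image_mset fst ?WH" by simp
  then have "nc_colors VG EG l = nc_colors VH EH l"
    unfolding nc_colors_def by (simp add: multiset.map_comp o_def)
  then show False using ne by simp
qed

end
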